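(* Let $F:(0,\infty)\to(0,\infty)$ be strictly decreasing and let $(x_n)_{n\in\mathbb Z}$ be an equilibrium configuration for $F$. Let $k\le m$ be integers and $S=\{k,k+1,\dots,m\}$. For $i\in S$ let $$G_i=\sum_{j\in S,\,j<i}F(x_i-x_j)-\sum_{j\in S,\,j>i}F(x_j-x_i)$$ be the signed force (positive meaning to the right) exerted on the particle at $x_i$ by the particles of $S$ only. Then $G_k\le G_{k+1}\le\dots\le G_m$.
   Context: A configuration is a strictly increasing bi-infinite sequence $(x_n)_{n\in\mathbb Z}$ of reals. The particle at $x_n$ is in equilibrium if $\sum_{m<n}F(x_n-x_m)$ and $\sum_{m>n}F(x_m-x_n)$ are both finite and equal. An equilibrium configuration is one in which every particle is in equilibrium. *)

theory Defs
  imports "HOL-Analysis.Analysis"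
begin

definition configuration :: "(int \<Rightarrow> real) \<Rightarrow> bool" where
  "configuration x \<longleftrightarrow> strict_mono x"

definition in_equilibrium :: "(real \<Rightarrow> real) \<Rightarrow> (int \<Rightarrow> real) \<Rightarrow> int \<Rightarrow> bool" where
  "in_equilibrium F x n \<longleftrightarrow>
     (\<lambda>m. F (x n - x m)) summable_on {..<n} \<and>
     (\<lambda>m. F (x m - x n)) summable_on {n<..} \<and>
     (\<Sum>\<^sub>\<infinity>m\<in>{..<n}. F (x n - x m)) = (\<Sum>\<^sub>\<infinity>m\<in>{n<..}. F (x m - x n))"

definition equilibrium_configuration :: "(real \<Rightarrow> real) \<Rightarrow> (int \<Rightarrow> real) \<Rightarrow> bool" where
  "equilibrium_configuration F x \<longleftrightarrow> configuration x \<and> (\<forall>n. in_equilibrium F x n)"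

definition restricted_force :: "(real \<Rightarrow> real) \<Rightarrow> (int \<Rightarrow> real) \<Rightarrow> int \<Rightarrow> int \<Rightarrow> int \<Rightarrow> real" where
  "restricted_force F x k m i =
     (\<Sum>j\<in>{k..m}. if j < i then F (x i - x j) else 0) -
     (\<Sum>j\<in>{k..m}. if j > i then F (x j - x i) else 0)"

end

theory Submission
  imports Defs
begin

lemma rf_repr:
  fixes F :: "real \<Rightarrow> real" and x :: "int \<Rightarrow> real" and k m n :: int
  assumes eq: "equilibrium_configuration F x"
    and kn: "k \<le> n" and nm: "n \<le> m"
  shows "restricted_force F x k m n =
     (\<Sum>\<^sub>\<infinity>j\<in>{m<..}. F (x j - x n)) - (\<Sum>\<^sub>\<infinity>j\<in>{..<k}. F (x n - x j))"
proof -
  have ie: "in_equilibrium F x n" using eq unfolding equilibrium_configuration_def by auto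
  let ?f = "\<lambda>j. F (x n - x j)" and ?g = "\<lambda>j. F (x j - x n)"
  have sL: "?f summable_on {..<n}" and sR: "?g summable_on {n<..}"
    and e: "(\<Sum>\<^sub>\<infinity>j\<in>{..<n}. ?f j) = (\<Sum>\<^sub>\<infinity>j\<in>{n<..}. ?g j)"
    using ie unfolding in_equilibrium_def by auto
  have u1: "{..<n} = {..<k} \<union> {k..<n}" using kn by auto
  have u2: "{n<..} = {n<..m} \<union> {m<..}" using nm by auto
  have sL1: "?f summable_on {..<k}" by (rule summable_on_subset_banach[OF sL]) (use kn in auto)
  have sR1: "?g summable_on {m<..}" by (rule summable_on_subset_banach[OF sR]) (use nm in auto)
  have L: "(\<Sum>\<^sub>\<infinity>j\<in>{..<n}. ?f j) = (\<Sum>\<^sub>\<infinity>j\<in>{..<k}. ?f j) + sum ?f {k..<n}"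
    unfolding u1 by (subst infsum_Un_disjoint) (use sL1 in auto)
  have R: "(\<Sum>\<^sub>\<infinity>j\<in>{n<..}. ?g j) = sum ?g {n<..m} + (\<Sum>\<^sub>\<infinity>j\<in>{m<..}. ?g j)"
    unfolding u2 by (subst infsum_Un_disjoint) (use sR1 in auto)
  have s1: "(\<Sum>j\<in>{k..m}. if j < n then F (x n - x j) else 0) = sum ?f {k..<n}"
  proof -
    have "{j\<in>{k..m}. j < n} = {k..<n}" using nm by auto
    then show ?thesis using sum.inter_filter[of "{k..m}" ?f "\<lambda>j. j < n"] by simp
  qed
  have s2: "(\<Sum>j\<in>{k..m}. if j > n then F (x j - x n) else 0) = sum ?g {n<..m}"
  proof -
    have "{j\<in>{k..m}. j > n} = {n<..m}" using kn by auto
    then show ?thesis using sum.inter_filter[of "{k..m}" ?g "\<lambda>j. j > n"] by simp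
  qed
  show ?thesis unfolding restricted_force_def s1 s2 using L R e by linarith
qed

theorem mainTheorem6:
  fixes F :: "real \<Rightarrow> real" and x :: "int \<Rightarrow> real" and k m :: int
  assumes pos: "\<And>a. 0 < a \<Longrightarrow> 0 < F a"
    and decr: "\<And>a b. 0 < a \<Longrightarrow> a < b \<Longrightarrow> F b < F a"
    and eq: "equilibrium_configuration F x"
    and km: "k \<le> m"
  shows "\<forall>i. k \<le> i \<and> i < m \<longrightarrow> restricted_force F x k m i \<le> restricted_force F x k m (i + 1)"
proof (intro allI impI)
  fix i assume ki: "k \<le> i \<and> i < m"
  have sm: "strict_mono x" using eq unfolding equilibrium_configuration_def configuration_def by auto
  have ie: "\<And>n. in_equilibrium F x n" using eq unfolding equilibrium_configuration_def by auto
  have sumL: "\<And>n. k \<le> n \<Longrightarrow> (\<lambda>j. F (x n - x j)) summable_on {..<k}"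
    by (rule summable_on_subset_banach[where A="{..<_}"]) (use ie in_equilibrium_def in auto)
  have sumR: "\<And>n. n \<le> m \<Longrightarrow> (\<lambda>j. F (x j - x n)) summable_on {m<..}"
    by (rule summable_on_subset_banach[where A="{_<..}"]) (use ie in_equilibrium_def in auto)
  have xi: "x i < x (i+1)" using sm by (simp add: strict_mono_def)
  have A: "(\<Sum>\<^sub>\<infinity>j\<in>{..<k}. F (x (i+1) - x j)) \<le> (\<Sum>\<^sub>\<infinity>j\<in>{..<k}. F (x i - x j))"
  proof (rule infsum_mono)
    show "(\<lambda>j. F (x (i+1) - x j)) summable_on {..<k}" using sumL ki by auto
    show "(\<lambda>j. F (x i - x j)) summable_on {..<k}" using sumL ki by auto
    fix j assume "j \<in> {..<k}"
    then have "x j < x i" using sm ki by (simp add: strict_mono_def)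
    then show "F (x (i+1) - x j) \<le> F (x i - x j)" using decr[of "x i - x j" "x (i+1) - x j"] xi by simp
  qed
  have B: "(\<Sum>\<^sub>\<infinity>j\<in>{m<..}. F (x j - x i)) \<le> (\<Sum>\<^sub>\<infinity>j\<in>{m<..}. F (x j - x (i+1)))"
  proof (rule infsum_mono)
    show "(\<lambda>j. F (x j - x (i+1))) summable_on {m<..}" using sumR ki by auto
    show "(\<lambda>j. F (x j - x i)) summable_on {m<..}" using sumR ki by auto
    fix j assume "j \<in> {m<..}"
    then have "x (i+1) < x j" using sm ki by (simp add: strict_mono_def)
    then show "F (x j - x i) \<le> F (x j - x (i+1))" using decr[of "x j - x (i+1)" "x j - x i"] xi by simp
  qed
  show "restricted_force F x k m i \<le> restricted_force F x k m (i + 1)"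
    using rf_repr[OF eq, of k i m] rf_repr[OF eq, of k "i+1" m] ki A B by simp
qed

end
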